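(* Let $0<p<1-1/e^2$ be constant, $b=\frac1{1-p}$, and $\gamma(n)=2\log_b n-2\log_b\log_b n-2\log_b 2$. Let $k=k(n)$ be positive integers such that $x=x(n):=\frac{n}{k}-\gamma(n)$ satisfies $x=O(1)$. Then, as $n\to\infty$, \[\bar\mu_{n,k}=b^{-\frac{x}{2}n+o(n)}.\]
   Context: For $n\in\mathbb{N}$ let $m(n)=\lfloor p\binom n2\rfloor$ and $G\sim\mathcal{G}(n,m(n))$, the uniform random graph on $n$ labelled vertices with exactly $m(n)$ edges. An ordered $k$-equipartition of $[n]$ is an ordered partition into $k$ parts each of size $\lceil n/k\rceil$ or $\lfloor n/k\rfloor$, the larger parts listed first. Let $k_{\mathrm L}=n-k\lfloor n/k\rfloor$ (number of parts of size $\lceil n/k\rceil$) and $k_{\mathrm S}=k-k_{\mathrm L}$. Let $X_{n,k}$ be the number of ordered $k$-equipartitions all of whose parts are independent in $G$, $\mu_{n,k}=\mathbb{E}[X_{n,k}]$ and $\bar\mu_{n,k}=\mu_{n,k}/(k_{\mathrm L}!\,k_{\mathrm S}!)$. *)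

theory Defs
  imports "HOL-Probability.Probability" "HOL-Library.Landau_Symbols"
begin

text \<open>Simple graphs on the vertex set {0..<n}, represented by their edge sets
  (sets of 2-element subsets of {0..<n}).\<close>

definition all_edges :: "nat \<Rightarrow> nat set set" where
  "all_edges n = {e. e \<subseteq> {0..<n} \<and> card e = 2}"

definition m_edges :: "real \<Rightarrow> nat \<Rightarrow> nat" where
  "m_edges p n = nat \<lfloor>p * real (n choose 2)\<rfloor>"

definition Gnm :: "nat \<Rightarrow> nat \<Rightarrow> nat set set pmf" where
  "Gnm n m = pmf_of_set {E. E \<subseteq> all_edges n \<and> card E = m}"

definition independent_in :: "nat set set \<Rightarrow> nat set \<Rightarrow> bool" where
  "independent_in E S \<longleftrightarrow> (\<forall>u\<in>S. \<forall>v\<in>S. {u, v} \<notin> E)"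

text \<open>Number of parts of size ceil(n/k) and of size floor(n/k).\<close>
definition kL :: "nat \<Rightarrow> nat \<Rightarrow> nat" where
  "kL n k = n - k * (n div k)"

definition kS :: "nat \<Rightarrow> nat \<Rightarrow> nat" where
  "kS n k = k - kL n k"

definition equipartitions :: "nat \<Rightarrow> nat \<Rightarrow> (nat \<Rightarrow> nat set) set" where
  "equipartitions n k = {P.
     (\<forall>i. k \<le> i \<longrightarrow> P i = {}) \<and>
     (\<Union>i<k. P i) = {0..<n} \<and>
     (\<forall>i<k. \<forall>j<k. i \<noteq> j \<longrightarrow> P i \<inter> P j = {}) \<and>
     (\<forall>i<k. card (P i) = (if i < kL n k then nat \<lceil>real n / real k\<rceil>
                                         else nat \<lfloor>real n / real k\<rfloor>))}"

definition X_count :: "nat \<Rightarrow> nat \<Rightarrow> nat set set \<Rightarrow> nat" where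
  "X_count n k E = card {P \<in> equipartitions n k. \<forall>i<k. independent_in E (P i)}"

definition mu :: "real \<Rightarrow> nat \<Rightarrow> nat \<Rightarrow> real" where
  "mu p n k = measure_pmf.expectation (Gnm n (m_edges p n)) (\<lambda>E. real (X_count n k E))"

definition mu_bar :: "real \<Rightarrow> nat \<Rightarrow> nat \<Rightarrow> real" where
  "mu_bar p n k = mu p n k / (fact (kL n k) * fact (kS n k))"

end

theory Submission
  imports Defs "HOL-Real_Asymp.Real_Asymp"
begin


definition EP :: "nat set \<Rightarrow> nat \<Rightarrow> (nat \<Rightarrow> nat) \<Rightarrow> (nat \<Rightarrow> nat set) set" where
  "EP A k c = {P. (\<forall>i. k \<le> i \<longrightarrow> P i = {}) \<and> (\<Union>i<k. P i) = A \<and>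
     (\<forall>i<k. \<forall>j<k. i \<noteq> j \<longrightarrow> P i \<inter> P j = {}) \<and> (\<forall>i<k. card (P i) = c i)}"

lemma EP_bij:
  "bij_betw (\<lambda>(S,P). P(k:=S)) (SIGMA S:{S. S \<subseteq> A \<and> card S = c k}. EP (A - S) k c) (EP A (Suc k) c)"
proof (rule bij_betw_byWitness[where f'="\<lambda>Q. (Q k, Q(k:={}))"])
  show "\<forall>a\<in>(SIGMA S:{S. S \<subseteq> A \<and> card S = c k}. EP (A - S) k c). (\<lambda>Q. (Q k, Q(k:={}))) ((\<lambda>(S,P). P(k:=S)) a) = a"
  proof (intro ballI)
    fix a assume "a \<in> (SIGMA S:{S. S \<subseteq> A \<and> card S = c k}. EP (A - S) k c)"
    then obtain S P where a: "a = (S, P)" and P: "P \<in> EP (A - S) k c" by blast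
    have "P k = {}" using P unfolding EP_def by simp
    then have "P(k:={}) = P" by (simp add: fun_upd_idem)
    then show "(\<lambda>Q. (Q k, Q(k:={}))) ((\<lambda>(S,P). P(k:=S)) a) = a" using a by simp
  qed
  show "\<forall>a'\<in>EP A (Suc k) c. (\<lambda>(S,P). P(k:=S)) ((\<lambda>Q. (Q k, Q(k:={}))) a') = a'"
    by (auto simp: fun_eq_iff)
  show "(\<lambda>(S,P). P(k:=S)) ` (SIGMA S:{S. S \<subseteq> A \<and> card S = c k}. EP (A - S) k c) \<subseteq> EP A (Suc k) c"
  proof clarify
    fix S P assume S: "S \<subseteq> A" "card S = c k" and P: "P \<in> EP (A - S) k c"
    have U: "(\<Union>i<Suc k. (P(k:=S)) i) = (\<Union>i<k. P i) \<union> S"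
      by (auto simp: lessThan_Suc)
    show "P(k:=S) \<in> EP A (Suc k) c"
      using S P unfolding EP_def
      apply (simp only: mem_Collect_eq U)
      apply (intro conjI)
      subgoal by auto
      subgoal by auto
      subgoal by (auto simp: less_Suc_eq)
      subgoal by (auto simp: less_Suc_eq)
      done
  qed
  show "(\<lambda>Q. (Q k, Q(k:={}))) ` EP A (Suc k) c \<subseteq> (SIGMA S:{S. S \<subseteq> A \<and> card S = c k}. EP (A - S) k c)"
  proof (rule image_subsetI)
    fix Q assume Q: "Q \<in> EP A (Suc k) c"
    have disj: "\<And>i j. i < Suc k \<Longrightarrow> j < Suc k \<Longrightarrow> i \<noteq> j \<Longrightarrow> Q i \<inter> Q j = {}"
      and U: "(\<Union>i<Suc k. Q i) = A" and ext: "\<And>i. Suc k \<le> i \<Longrightarrow> Q i = {}"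
      and cd: "\<And>i. i < Suc k \<Longrightarrow> card (Q i) = c i"
      using Q unfolding EP_def by auto
    have U': "(\<Union>i<k. Q i) \<union> Q k = A" using U by (simp add: lessThan_Suc Un_commute)
    have D: "Q i \<inter> Q k = {}" if "i < k" for i using disj[of i k] that by simp
    have U2: "(\<Union>i<k. Q i) = A - Q k"
    proof
      show "(\<Union>i<k. Q i) \<subseteq> A - Q k"
        using U' D by blast
      show "A - Q k \<subseteq> (\<Union>i<k. Q i)" using U' by blast
    qed
    have "Q k \<subseteq> A" using U' by blast
    moreover have "card (Q k) = c k" using cd by simp
    moreover have "Q(k:={}) \<in> EP (A - Q k) k c"
      unfolding EP_def
    proof (intro CollectI conjI allI impI)
      show "(Q(k:={})) i = {}" if "k \<le> i" for i using ext[of i] that by (cases "i = k") auto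
      show "(\<Union>i<k. (Q(k:={})) i) = A - Q k" using U2 by simp
      show "(Q(k:={})) i \<inter> (Q(k:={})) j = {}" if "i < k" "j < k" "i \<noteq> j" for i j
        using disj[of i j] that by simp
      show "card ((Q(k:={})) i) = c i" if "i < k" for i using cd[of i] that by simp
    qed
    ultimately show "(Q k, Q(k:={})) \<in> (SIGMA S:{S. S \<subseteq> A \<and> card S = c k}. EP (A - S) k c)"
      by blast
  qed
qed

lemma EP_count:
  "finite A \<Longrightarrow> sum c {..<k} = card A \<Longrightarrow> card (EP A k c) * (\<Prod>i<k. fact (c i)) = fact (card A)"
proof (induction k arbitrary: A)
  case 0
  then have "A = {}" by simp
  then have "EP A 0 c = {\<lambda>_. {}}" by (auto simp: EP_def)
  then show ?case using \<open>A = {}\<close> by simp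
next
  case (Suc k)
  define Ss where "Ss = {S. S \<subseteq> A \<and> card S = c k}"
  define Pk where "Pk = (\<Prod>i<k. fact (c i) :: nat)"
  have ck: "c k \<le> card A" using Suc.prems by simp
  have IH: "card (EP (A - S) k c) * Pk = fact (card A - c k)" if "S \<in> Ss" for S
  proof -
    have "card (A - S) = card A - c k" using that Suc.prems by (auto simp: Ss_def card_Diff_subset finite_subset)
    moreover have "sum c {..<k} = card A - c k" using Suc.prems by simp
    ultimately show ?thesis using Suc.IH[of "A - S"] Suc.prems unfolding Pk_def by simp
  qed
  have fin: "finite (EP (A - S) k c)" if "S \<in> Ss" for S
  proof (rule ccontr)
    assume "infinite (EP (A - S) k c)"
    then have "card (EP (A - S) k c) = 0" by simp
    then show False using IH[OF that] by simp
  qed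
  have finSs: "finite Ss" using Suc.prems by (auto simp: Ss_def)
  have "card (EP A (Suc k) c) = card (SIGMA S:Ss. EP (A - S) k c)"
    using bij_betw_same_card[OF EP_bij[of k A c]] unfolding Ss_def by simp
  also have "\<dots> = (\<Sum>S\<in>Ss. card (EP (A - S) k c))"
    using finSs fin by (simp add: card_SigmaI)
  finally have "card (EP A (Suc k) c) * Pk = (\<Sum>S\<in>Ss. card (EP (A - S) k c) * Pk)"
    by (simp add: sum_distrib_right)
  also have "\<dots> = (\<Sum>S\<in>Ss. fact (card A - c k))" using IH by simp
  also have "\<dots> = (card A choose c k) * fact (card A - c k)"
    using n_subsets[OF Suc.prems(1), of "c k"] by (simp add: Ss_def)
  finally have "card (EP A (Suc k) c) * Pk * fact (c k) = fact (c k) * fact (card A - c k) * (card A choose c k)"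
    by simp
  also have "\<dots> = fact (card A)" using binomial_fact_lemma[OF ck] by simp
  finally show ?case by (simp add: Pk_def mult.assoc)
qed


lemma kL_eq: "kL n k = n mod k"
  unfolding kL_def by (metis minus_div_mult_eq_mod mult.commute)

definition csz :: "nat \<Rightarrow> nat \<Rightarrow> nat \<Rightarrow> nat" where
  "csz n k i = (if i < n mod k then Suc (n div k) else n div k)"

lemma floor_nk: "nat \<lfloor>real n / real k\<rfloor> = n div k"
proof -
  have "\<lfloor>real n / real k\<rfloor> = int (n div k)" by (rule floor_divide_of_nat_eq)
  then show ?thesis by simp
qed

lemma ceil_nk:
  assumes "k > 0" "n mod k \<noteq> 0"
  shows "nat \<lceil>real n / real k\<rceil> = Suc (n div k)"
proof -
  have n: "real n = real k * real (n div k) + real (n mod k)"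
    by (metis div_mult_mod_eq of_nat_add of_nat_mult mult.commute)
  have r: "0 < real (n mod k)" "real (n mod k) < real k" using assms by auto
  have "real n / real k = real (n div k) + real (n mod k) / real k"
    using n assms by (simp add: field_simps)
  moreover have "0 < real (n mod k) / real k" "real (n mod k) / real k < 1" using r by auto
  ultimately have "\<lceil>real n / real k\<rceil> = int (n div k) + 1"
    by (subst ceiling_eq_iff) simp
  then show ?thesis by simp
qed

lemma equipartitions_EP:
  assumes "k > 0"
  shows "equipartitions n k = EP {0..<n} k (csz n k)"
proof -
  have "(if i < kL n k then nat \<lceil>real n / real k\<rceil> else nat \<lfloor>real n / real k\<rfloor>) = csz n k i" for i
  proof (cases "i < n mod k")
    case True
    then have "n mod k \<noteq> 0" by simp
    then show ?thesis using True ceil_nk[OF assms] by (simp add: kL_eq csz_def)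
  next
    case False
    then show ?thesis by (simp add: kL_eq csz_def floor_nk)
  qed
  then show ?thesis unfolding equipartitions_def EP_def by simp
qed

lemma sum_csz: assumes "k > 0" shows "sum (csz n k) {..<k} = n"
proof -
  have fin: "finite {..<k}" by simp
  have "sum (csz n k) {..<k} = (\<Sum>i<k. n div k + (if i < n mod k then 1 else 0))"
    by (rule sum.cong) (auto simp: csz_def)
  also have "\<dots> = k * (n div k) + card ({..<k} \<inter> {i. i < n mod k})"
    by (simp add: sum.distrib sum.If_cases)
  also have "{..<k} \<inter> {i. i < n mod k} = {..<n mod k}"
    using assms by (auto intro: less_trans[OF _ mod_less_divisor])
  finally show ?thesis by simp
qed

lemma sum_if_split:
  fixes g h :: "nat \<Rightarrow> 'a::comm_monoid_add"
  assumes "r \<le> k"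
  shows "(\<Sum>i<k. if i < r then a else b) = of_nat r * a + of_nat (k - r) * b"
proof -
  have "(\<Sum>i<k. if i < r then a else b) = (\<Sum>i\<in>{..<k} \<inter> {i. i < r}. a) + (\<Sum>i\<in>{..<k} \<inter> - {i. i < r}. b)"
    by (simp add: sum.If_cases)
  also have "{..<k} \<inter> {i. i < r} = {..<r}" using assms by auto
  also have "{..<k} \<inter> - {i. i < r} = {r..<k}" by auto
  finally show ?thesis by (simp add: of_nat_id)
qed

lemma prod_if_split:
  assumes "r \<le> k"
  shows "(\<Prod>i<k. if i < r then a else b) = (a::'a::comm_monoid_mult) ^ r * b ^ (k - r)"
proof -
  have "(\<Prod>i<k. if i < r then a else b) = (\<Prod>i\<in>{..<k} \<inter> {i. i < r}. a) * (\<Prod>i\<in>{..<k} \<inter> - {i. i < r}. b)"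
    by (simp add: prod.If_cases)
  also have "{..<k} \<inter> {i. i < r} = {..<r}" using assms by auto
  also have "{..<k} \<inter> - {i. i < r} = {r..<k}" by auto
  finally show ?thesis by simp
qed

lemma card_equipartitions:
  assumes "k > 0"
  shows "real (card (equipartitions n k)) =
    fact n / (fact (Suc (n div k)) ^ (n mod k) * fact (n div k) ^ (k - n mod k))"
proof -
  have le: "n mod k \<le> k" using assms by (simp add: less_imp_le)
  have "card (EP {0..<n} k (csz n k)) * (\<Prod>i<k. fact (csz n k i)) = fact n"
    using EP_count[of "{0..<n}" "csz n k" k] sum_csz[OF assms] by simp
  moreover have "(\<Prod>i<k. fact (csz n k i)) = (fact (Suc (n div k)) ^ (n mod k) * fact (n div k) ^ (k - n mod k) :: nat)"
  proof -
    have "(\<lambda>i. fact (csz n k i) :: nat) = (\<lambda>i. if i < n mod k then fact (Suc (n div k)) else fact (n div k))"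
      by (auto simp: csz_def fun_eq_iff)
    then show ?thesis using prod_if_split[OF le, of "fact (Suc (n div k)) :: nat" "fact (n div k)"]
      by (simp only:)
  qed
  ultimately have "card (equipartitions n k) * (fact (Suc (n div k)) ^ (n mod k) * fact (n div k) ^ (k - n mod k)) = fact n"
    using equipartitions_EP[OF assms] by simp
  then have "real (card (equipartitions n k) * (fact (Suc (n div k)) ^ (n mod k) * fact (n div k) ^ (k - n mod k))) = real (fact n)"
    by (simp only:)
  then have "real (card (equipartitions n k)) * (fact (Suc (n div k)) ^ (n mod k) * fact (n div k) ^ (k - n mod k)) = fact n"
    by (simp only: of_nat_mult of_nat_power of_nat_fact)
  moreover define D :: real where "D = fact (Suc (n div k)) ^ (n mod k) * fact (n div k) ^ (k - n mod k)"
  moreover have "D > 0" unfolding D_def by (intro mult_pos_pos zero_less_power) auto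
  ultimately have "real (card (equipartitions n k)) = fact n / D"
    by (simp add: eq_divide_eq)
  then show ?thesis by (simp only: D_def)
qed



lemma card_all_edges: "card (all_edges n) = n choose 2"
  unfolding all_edges_def using n_subsets[of "{0..<n}" 2] by simp

lemma finite_all_edges: "finite (all_edges n)"
  unfolding all_edges_def by simp

definition inner_edges :: "(nat \<Rightarrow> nat set) \<Rightarrow> nat \<Rightarrow> nat set set" where
  "inner_edges P k = (\<Union>i<k. {e. e \<subseteq> P i \<and> card e = 2})"

lemma good_iff:
  assumes "E \<subseteq> all_edges n"
  shows "(\<forall>i<k. independent_in E (P i)) \<longleftrightarrow> E \<inter> inner_edges P k = {}"
proof
  assume L: "\<forall>i<k. independent_in E (P i)"
  show "E \<inter> inner_edges P k = {}"
  proof (rule ccontr)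
    assume "E \<inter> inner_edges P k \<noteq> {}"
    then obtain e i where e: "e \<in> E" "i < k" "e \<subseteq> P i" "card e = 2"
      unfolding inner_edges_def by blast
    then obtain u v where "e = {u, v}" by (auto simp: card_2_iff)
    then show False using L e unfolding independent_in_def by auto
  qed
next
  assume R: "E \<inter> inner_edges P k = {}"
  show "\<forall>i<k. independent_in E (P i)"
    unfolding independent_in_def
  proof (intro allI impI ballI)
    fix i u v assume i: "i < k" and uv: "u \<in> P i" "v \<in> P i"
    show "{u, v} \<notin> E"
    proof
      assume uvE: "{u, v} \<in> E"
      then have "card {u, v} = 2" using assms unfolding all_edges_def by auto
      then have "{u, v} \<in> inner_edges P k" using i uv unfolding inner_edges_def by auto
      then show False using R uvE by auto
    qed
  qed
qed

lemma inner_edges_sub: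
  assumes "P \<in> EP {0..<n} k c"
  shows "inner_edges P k \<subseteq> all_edges n"
proof -
  have "P i \<subseteq> {0..<n}" if "i < k" for i using assms that unfolding EP_def by auto
  then show ?thesis unfolding inner_edges_def all_edges_def by blast
qed

lemma card_inner_edges:
  assumes "P \<in> EP {0..<n} k c"
  shows "card (inner_edges P k) = (\<Sum>i<k. c i choose 2)"
proof -
  have sub: "P i \<subseteq> {0..<n}" if "i < k" for i using assms that unfolding EP_def by auto
  have fin: "finite (P i)" if "i < k" for i using sub[OF that] finite_subset by blast
  have disj: "P i \<inter> P j = {}" if "i < k" "j < k" "i \<noteq> j" for i j
    using assms that unfolding EP_def by auto
  have cd: "card (P i) = c i" if "i < k" for i using assms that unfolding EP_def by auto
  have "card (inner_edges P k) = (\<Sum>i<k. card {e. e \<subseteq> P i \<and> card e = 2})"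
    unfolding inner_edges_def
  proof (rule card_UN_disjoint)
    show "finite {..<k}" by simp
    show "\<forall>i\<in>{..<k}. finite {e. e \<subseteq> P i \<and> card e = 2}" using fin by auto
    show "\<forall>i\<in>{..<k}. \<forall>j\<in>{..<k}. i \<noteq> j \<longrightarrow> {e. e \<subseteq> P i \<and> card e = 2} \<inter> {e. e \<subseteq> P j \<and> card e = 2} = {}"
    proof (intro ballI impI)
      fix i j assume "i \<in> {..<k}" "j \<in> {..<k}" "i \<noteq> j"
      then have d: "P i \<inter> P j = {}" using disj by auto
      show "{e. e \<subseteq> P i \<and> card e = 2} \<inter> {e. e \<subseteq> P j \<and> card e = 2} = {}"
      proof (rule ccontr)
        assume "{e. e \<subseteq> P i \<and> card e = 2} \<inter> {e. e \<subseteq> P j \<and> card e = 2} \<noteq> {}"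
        then obtain e where "e \<subseteq> P i" "e \<subseteq> P j" "card e = 2" by blast
        then have "e = {}" using d by blast
        then show False using \<open>card e = 2\<close> by simp
      qed
    qed
  qed
  also have "\<dots> = (\<Sum>i<k. c i choose 2)"
    by (rule sum.cong) (auto simp: n_subsets fin cd)
  finally show ?thesis .
qed

lemma sum_swap_card:
  assumes "finite A" "finite B"
  shows "(\<Sum>a\<in>A. card {b\<in>B. R a b}) = (\<Sum>b\<in>B. card {a\<in>A. R a b})"
proof -
  have "(\<Sum>a\<in>A. card {b\<in>B. R a b}) = (\<Sum>a\<in>A. \<Sum>b\<in>B. if R a b then 1 else 0)"
    using assms by (simp add: sum.If_cases Int_def conj_commute)
  also have "\<dots> = (\<Sum>b\<in>B. \<Sum>a\<in>A. if R a b then 1 else 0)" by (rule sum.swap)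
  also have "\<dots> = (\<Sum>b\<in>B. card {a\<in>A. R a b})"
    using assms by (simp add: sum.If_cases Int_def conj_commute)
  finally show ?thesis .
qed

lemma finite_equipartitions:
  assumes "k > 0" shows "finite (equipartitions n k)"
proof (rule ccontr)
  assume "infinite (equipartitions n k)"
  then have "card (equipartitions n k) = 0" by simp
  then show False using card_equipartitions[OF assms, of n] by simp
qed

lemma mu_formula:
  assumes k: "k > 0" and m: "m_edges p n \<le> n choose 2"
  shows "mu p n k = real (card (equipartitions n k)) *
     real (((n choose 2) - (\<Sum>i<k. csz n k i choose 2)) choose m_edges p n) / real ((n choose 2) choose m_edges p n)"
proof -
  define m where "m = m_edges p n"
  define Om where "Om = {E. E \<subseteq> all_edges n \<and> card E = m}"
  define EQ where "EQ = equipartitions n k"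
  define f where "f = (\<Sum>i<k. csz n k i choose 2)"
  have finOm: "finite Om" unfolding Om_def using finite_all_edges by simp
  have cardOm: "card Om = (n choose 2) choose m" unfolding Om_def
    using n_subsets[OF finite_all_edges, of n m] card_all_edges by simp
  have Omne: "Om \<noteq> {}"
  proof
    assume "Om = {}" then have "card Om = 0" by simp
    then show False using cardOm m unfolding m_def by simp
  qed
  have finEQ: "finite EQ" unfolding EQ_def using finite_equipartitions[OF k] .
  have each: "card {E\<in>Om. \<forall>i<k. independent_in E (P i)} = ((n choose 2) - f) choose m" if P: "P \<in> EQ" for P
  proof -
    have P': "P \<in> EP {0..<n} k (csz n k)" using P equipartitions_EP[OF k] unfolding EQ_def by simp
    have "{E\<in>Om. \<forall>i<k. independent_in E (P i)} = {E. E \<subseteq> all_edges n - inner_edges P k \<and> card E = m}"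
      unfolding Om_def using good_iff by blast
    moreover have "card (all_edges n - inner_edges P k) = (n choose 2) - f"
      using card_Diff_subset[OF finite_subset[OF inner_edges_sub[OF P'] finite_all_edges] inner_edges_sub[OF P']]
        card_all_edges card_inner_edges[OF P'] unfolding f_def by simp
    ultimately show ?thesis using n_subsets[of "all_edges n - inner_edges P k" m] finite_all_edges by simp
  qed
  have "mu p n k = (\<Sum>E\<in>Om. real (X_count n k E)) / card Om"
    unfolding mu_def Gnm_def m_def[symmetric] Om_def[symmetric]
    by (rule integral_pmf_of_set[OF Omne finOm])
  also have "(\<Sum>E\<in>Om. real (X_count n k E)) = real (\<Sum>E\<in>Om. card {P\<in>EQ. \<forall>i<k. independent_in E (P i)})"
    unfolding X_count_def EQ_def by simp
  also have "(\<Sum>E\<in>Om. card {P\<in>EQ. \<forall>i<k. independent_in E (P i)}) = (\<Sum>P\<in>EQ. card {E\<in>Om. \<forall>i<k. independent_in E (P i)})"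
    by (rule sum_swap_card[OF finOm finEQ])
  also have "\<dots> = (\<Sum>P\<in>EQ. ((n choose 2) - f) choose m)" using each by simp
  also have "\<dots> = card EQ * (((n choose 2) - f) choose m)" by simp
  finally show ?thesis unfolding cardOm EQ_def f_def m_def by simp
qed



lemma ln_succ_bounds:
  assumes "n \<ge> 1"
  shows "ln (real n + 1) - ln (real n) \<le> 1 / real n"
    and "1 / (real n + 1) \<le> ln (real n + 1) - ln (real n)"
proof -
  have n: "real n > 0" using assms by simp
  have "ln ((real n + 1) / real n) \<le> (real n + 1) / real n - 1"
    by (rule ln_le_minus_one) (use n in simp)
  then show "ln (real n + 1) - ln (real n) \<le> 1 / real n"
    using n by (simp add: ln_div field_simps)
  have "ln (real n / (real n + 1)) \<le> real n / (real n + 1) - 1"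
    by (rule ln_le_minus_one) (use n in simp)
  then show "1 / (real n + 1) \<le> ln (real n + 1) - ln (real n)"
    using n by (simp add: ln_div field_simps)
qed

lemma ln_fact_bounds:
  assumes "n \<ge> 1"
  shows "real n * ln (real n) - real n \<le> ln (fact n)
       \<and> ln (fact n) \<le> real n * ln (real n) - real n + ln (real n) + 1"
  using assms
proof (induction n rule: dec_induct)
  case base
  then show ?case by simp
next
  case (step n)
  have n: "real n > 0" using step.hyps by simp
  have lf: "ln (fact (Suc n) :: real) = ln (real n + 1) + ln (fact n)"
    by (simp add: ln_mult add.commute)
  note b = ln_succ_bounds[OF step.hyps(1)]
  have b1: "real n * (ln (real n + 1) - ln (real n)) \<le> 1"
    using mult_left_mono[OF b(1), of "real n"] n by simp
  have b2: "(real n + 1) * (ln (real n + 1) - ln (real n)) \<ge> 1"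
    using mult_left_mono[OF b(2), of "real n + 1"] n by simp
  show ?case using step.IH b1 b2 unfolding lf
    by (simp add: algebra_simps)
qed

lemma binom_ratio_step:
  assumes "j < a"
  shows "real (a choose Suc j) = real (a choose j) * (real a - real j) / (real j + 1)"
proof -
  have "Suc j * (a choose Suc j) = a * ((a - 1) choose j)" by (rule binomial_absorption)
  also have "\<dots> = (a - j) * (a choose j)" by (rule binomial_absorb_comp[symmetric])
  finally have "real (Suc j) * real (a choose Suc j) = (real a - real j) * real (a choose j)"
    using assms by (metis of_nat_diff of_nat_mult less_imp_le)
  then show ?thesis by (simp add: field_simps)
qed

lemma ratio_bounds:
  fixes N m f :: nat
  assumes "m + f \<le> N" "f < N"
  shows "(1 - real m / (real N - real f)) ^ f \<le> real ((N - m) choose f) / real (N choose f)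
       \<and> real ((N - m) choose f) / real (N choose f) \<le> (1 - real m / real N) ^ f"
proof -
  have "j \<le> f \<Longrightarrow> (1 - real m / (real N - real f)) ^ j \<le> real ((N - m) choose j) / real (N choose j)
       \<and> real ((N - m) choose j) / real (N choose j) \<le> (1 - real m / real N) ^ j" for j
  proof (induction j)
    case 0
    then show ?case by simp
  next
    case (Suc j)
    have j: "j < f" using Suc.prems by simp
    have IH: "(1 - real m / (real N - real f)) ^ j \<le> real ((N - m) choose j) / real (N choose j)"
      "real ((N - m) choose j) / real (N choose j) \<le> (1 - real m / real N) ^ j"
      using Suc.IH j by auto
    have jN: "j < N - m" "j < N" using j assms by auto
    have pos1: "real (N choose j) > 0" using jN by simp
    have eq: "real ((N - m) choose Suc j) / real (N choose Suc j)
        = real ((N - m) choose j) / real (N choose j) * ((real N - real m - real j) / (real N - real j))"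
    proof -
      have mN: "m \<le> N" using assms by simp
      have e1: "real ((N - m) choose Suc j) = real ((N - m) choose j) * (real N - real m - real j) / (real j + 1)"
        using binom_ratio_step[OF jN(1)] mN by (simp add: of_nat_diff)
      have e2: "real (N choose Suc j) = real (N choose j) * (real N - real j) / (real j + 1)"
        using binom_ratio_step[OF jN(2)] by simp
      have Nj: "real N - real j > 0" using jN by simp
      have aux: "\<And>A B a d e::real. B \<noteq> 0 \<Longrightarrow> d \<noteq> 0 \<Longrightarrow> e \<noteq> 0 \<Longrightarrow> (A * a / e) / (B * d / e) = A / B * (a / d)"
        by (simp add: field_simps)
      show ?thesis unfolding e1 e2 using pos1 Nj by (intro aux) auto
    qed
    have Nf: "real N - real f > 0" using assms by simp
    have Nj: "real N - real j > 0" using jN by simp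
    have fac_lo: "1 - real m / (real N - real f) \<le> (real N - real m - real j) / (real N - real j)"
    proof -
      have "real m / (real N - real j) \<le> real m / (real N - real f)"
        using j Nf by (intro divide_left_mono) auto
      then show ?thesis using Nj by (simp add: field_simps)
    qed
    have fac_hi: "(real N - real m - real j) / (real N - real j) \<le> 1 - real m / real N"
    proof -
      have "real m / real N \<le> real m / (real N - real j)"
        using Nj by (intro divide_left_mono) auto
      then show ?thesis using Nj by (simp add: field_simps)
    qed
    have lo0: "0 \<le> 1 - real m / (real N - real f)" using Nf assms by (simp add: field_simps)
    have r0: "0 \<le> real ((N - m) choose j) / real (N choose j)" by simp
    have f0: "0 \<le> (real N - real m - real j) / (real N - real j)" using jN Nj by simp
    have mN1: "real m / real N \<le> 1" using assms by (simp add: divide_le_eq_1)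
    show ?case unfolding eq power_Suc
    proof
      show "(1 - real m / (real N - real f)) * (1 - real m / (real N - real f)) ^ j
          \<le> real ((N - m) choose j) / real (N choose j) * ((real N - real m - real j) / (real N - real j))"
        by (subst mult.commute) (rule mult_mono[OF IH(1) fac_lo r0]; use lo0 in simp)
      show "real ((N - m) choose j) / real (N choose j) * ((real N - real m - real j) / (real N - real j))
          \<le> (1 - real m / real N) * (1 - real m / real N) ^ j"
        by (subst mult.commute) (rule mult_mono[OF fac_hi IH(2)]; use f0 r0 mN1 in simp)
    qed
  qed
  then show ?thesis by simp
qed

lemma choose_swap:
  fixes N m f :: nat
  assumes "m + f \<le> N"
  shows "((N - f) choose m) * (N choose f) = (N choose m) * ((N - m) choose f)"
proof -
  have "(N choose (N - f)) * ((N - f) choose m) = (N choose m) * ((N - m) choose (N - f - m))"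
    using assms by (intro choose_mult) auto
  moreover have "N choose (N - f) = N choose f" using assms binomial_symmetric[of f N] by simp
  moreover have "(N - m) choose (N - f - m) = (N - m) choose f"
  proof -
    have "f \<le> N - m" using assms by simp
    then have "(N - m) choose f = (N - m) choose (N - m - f)" by (rule binomial_symmetric)
    moreover have "N - m - f = N - f - m" by simp
    ultimately show ?thesis by simp
  qed
  ultimately show ?thesis by (simp add: mult.commute)
qed

lemma fact_split_bounds:
  fixes r k :: nat
  assumes "r \<le> k"
  shows "ln (fact r * fact (k - r) :: real) \<le> ln (fact k)"
    and "ln (fact k :: real) - real k * ln 2 \<le> ln (fact r * fact (k - r))"
proof -
  have eq: "fact r * fact (k - r) * real (k choose r) = fact k"
  proof -
    have "real (fact r * fact (k - r) * (k choose r)) = real (fact k)"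
      using binomial_fact_lemma[OF assms] by (simp only:)
    then show ?thesis by (simp only: of_nat_mult of_nat_fact)
  qed
  have c1: "real (k choose r) \<ge> 1" using assms by (simp add: Suc_le_eq)
  have c2: "real (k choose r) \<le> 2 ^ k"
  proof -
    have "real (k choose r) \<le> real ((2::nat) ^ k)" using binomial_le_pow2[of k r] by (simp only: of_nat_le_iff)
    then show ?thesis by simp
  qed
  have pos: "(fact r * fact (k - r) :: real) > 0" by simp
  have "fact r * fact (k - r) \<le> (fact k :: real)"
    using mult_left_mono[OF c1, of "fact r * fact (k - r) :: real"] eq pos by simp
  then show "ln (fact r * fact (k - r) :: real) \<le> ln (fact k)" using pos by simp
  have "fact k \<le> (fact r * fact (k - r) :: real) * 2 ^ k"
    using mult_left_mono[OF c2, of "fact r * fact (k - r) :: real"] eq pos by simp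
  then have "ln (fact k :: real) \<le> ln (fact r * fact (k - r) * 2 ^ k)" using pos by simp
  also have "\<dots> = ln (fact r * fact (k - r)) + real k * ln 2"
    using pos by (simp add: ln_mult ln_realpow)
  finally show "ln (fact k :: real) - real k * ln 2 \<le> ln (fact r * fact (k - r))" by simp
qed



lemma real_choose_two: "real (c choose 2) = real c * (real c - 1) / 2"
proof (induction c)
  case 0 then show ?case by simp
next
  case (Suc c)
  have "Suc c choose Suc 1 = (c choose 1) + (c choose Suc 1)" by (rule binomial_Suc_Suc)
  then have "Suc c choose 2 = c + (c choose 2)" by (simp only: Suc_1 choose_one)
  then have "real (Suc c choose 2) = real (c choose 2) + real c" by (simp only: of_nat_add add.commute)
  then show ?case using Suc.IH by (simp add: field_simps)
qed

lemma f_formula: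
  assumes "k > 0"
  shows "real (\<Sum>i<k. csz n k i choose 2) =
     real (n mod k) * (real (n div k) + 1) * real (n div k) / 2 + real (k - n mod k) * real (n div k) * (real (n div k) - 1) / 2"
proof -
  have le: "n mod k \<le> k" using assms by (simp add: less_imp_le)
  have "(\<Sum>i<k. csz n k i choose 2) = (\<Sum>i<k. if i < n mod k then Suc (n div k) choose 2 else n div k choose 2)"
    by (rule sum.cong) (auto simp: csz_def)
  also have "\<dots> = n mod k * (Suc (n div k) choose 2) + (k - n mod k) * (n div k choose 2)"
    using sum_if_split[OF le, of "Suc (n div k) choose 2" "n div k choose 2"] by simp
  finally have "real (\<Sum>i<k. csz n k i choose 2) = real (n mod k) * real (Suc (n div k) choose 2) + real (k - n mod k) * real (n div k choose 2)"
    by simp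
  then show ?thesis unfolding real_choose_two by (simp add: field_simps)
qed



lemma main_bounds:
  fixes p b t :: real and n k :: nat
  assumes p0: "0 < p" and p1: "p < 1" and bdef: "b = 1 / (1 - p)" and k0: "k > 0" and n2: "n \<ge> 2"
    and tdef: "t = real n / real k" and t2: "t \<ge> 2" and tn: "t / real n \<le> 1 / (8 * b)"
  shows "mu_bar p n k > 0 \<and>
    \<bar>ln (mu_bar p n k) - (real n * ln (real n) - real n * ln t - real k * ln (real k) - real n * (t - 1) / 2 * ln b)\<bar>
      \<le> 4 * real k + real k * ln (t + 1) + real k * ln b + 4 * b * t^2 + b * t + ln (real n) + 1"
proof -
  define s where "s = n div k"
  define r where "r = n mod k"
  define N where "N = n choose 2"
  define m where "m = m_edges p n"
  define f where "f = (\<Sum>i<k. csz n k i choose 2)"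
  have b1: "b > 1" unfolding bdef using p0 p1 by (simp add: less_divide_eq)
  have lnb: "ln b > 0" using b1 by simp
  have ln1p: "ln (1 - p) = - ln b" using bdef p1 by (simp add: ln_div)
  have kpos: "real k > 0" using k0 by simp
  have npos: "real n > 0" using n2 by simp
  have nks: "real n = real k * real s + real r"
    unfolding s_def r_def by (metis div_mult_mod_eq of_nat_add of_nat_mult mult.commute)
  have rk: "r < k" unfolding r_def using k0 by simp
  have r0: "real r \<ge> 0" by simp
  have tk: "t * real k = real n" using tdef kpos by simp
  have st: "real s \<le> t" "t < real s + 1"
  proof -
    have "real r / real k < 1" "real r / real k \<ge> 0" using rk kpos by auto
    moreover have "t = real s + real r / real k" using tdef nks kpos by (simp add: field_simps)
    ultimately show "real s \<le> t" "t < real s + 1" by auto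
  qed
  have s1: "real s \<ge> 1" using st t2 by simp
  have s2t: "2 * real s \<ge> t" using st s1 by simp
  have kn: "real k \<le> real n"
  proof -
    have "2 * real k \<le> t * real k" using t2 kpos by (intro mult_right_mono) auto
    then show ?thesis using tk kpos by linarith
  qed
  have Nreal: "real N = real n * (real n - 1) / 2" unfolding N_def by (rule real_choose_two)
  have Nlow: "real N \<ge> real n ^ 2 / 4"
  proof -
    have "2 * real n \<le> real n * real n" using n2 by (intro mult_right_mono) auto
    then show ?thesis using Nreal by (simp add: power2_eq_square field_simps)
  qed
  have Npos: "real N > 0"
  proof -
    have "real n ^ 2 > 0" using npos by simp
    then show ?thesis using Nlow by linarith
  qed
  have pN0: "p * real N \<ge> 0" using p0 Npos by simp
  have mreal: "real m = of_int \<lfloor>p * real N\<rfloor>" unfolding m_def m_edges_def N_def[symmetric]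
    using pN0 by simp
  have mup: "real m \<le> p * real N" using mreal by linarith
  have mlo: "real m > p * real N - 1" using mreal by linarith
  have freal: "real f = real r * (real s + 1) * real s / 2 + real (k - r) * real s * (real s - 1) / 2"
    unfolding f_def r_def s_def by (rule f_formula[OF k0])
  have kr: "real (k - r) = real k - real r" using rk by simp
  have f2: "2 * real f = real n * (t - 1) + real r * (real k - real r) / real k"
  proof -
    have "2 * real f = real k * real s ^ 2 - real k * real s + 2 * real r * real s"
      unfolding freal kr by (simp add: field_simps power2_eq_square)
    moreover have "real n * (t - 1) = real k * real s ^ 2 + 2 * real r * real s + real r ^ 2 / real k - real k * real s - real r"
      unfolding tdef nks using kpos by (simp add: field_simps power2_eq_square)
    moreover have "real r * (real k - real r) / real k = real r - real r ^ 2 / real k"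
      using kpos by (simp add: field_simps power2_eq_square)
    ultimately show ?thesis by linarith
  qed
  have rr: "0 \<le> real r * (real k - real r) / real k" "real r * (real k - real r) / real k \<le> real k"
  proof -
    show "0 \<le> real r * (real k - real r) / real k" using rk kpos by simp
    have "real r * (real k - real r) \<le> real k * real k" using rk
      by (intro mult_mono) auto
    then show "real r * (real k - real r) / real k \<le> real k" using kpos by (simp add: divide_le_eq)
  qed
  have flo: "real f \<ge> real n * (t - 1) / 2" using f2 rr by linarith
  have fhi: "real f \<le> real n * (t - 1) / 2 + real k / 2" using f2 rr by linarith
  have fnt: "real f \<le> real n * t / 2" using fhi kn by (simp add: field_simps)
  have fN: "real f / real N \<le> 2 * t / real n"
  proof -
    have "real f / real N \<le> (real n * t / 2) / (real n ^ 2 / 4)"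
      using fnt Nlow Npos npos by (intro frac_le) auto
    also have "\<dots> = 2 * t / real n" using npos by (simp add: field_simps power2_eq_square)
    finally show ?thesis .
  qed
  have fN2: "real f / real N \<le> 1 / (4 * b)"
  proof -
    have "2 * t / real n = 2 * (t / real n)" by simp
    moreover have "2 * (1 / (8 * b)) = 1 / (4 * b)" by simp
    ultimately show ?thesis using fN tn by linarith
  qed
  have fN3: "real f \<le> real N * (1 - p) / 4" using fN2 Npos bdef p1 by (simp add: field_simps)
  have mf: "m + f \<le> N"
  proof -
    have "p * real N \<le> real N" using p0 p1 Npos by (intro mult_left_le_one_le) auto
    then have "real m + real f \<le> real N" using mup fN3 pN0 by (simp add: field_simps)
    then show ?thesis by linarith
  qed
  have fltN: "f < N"
  proof -
    have "real f < real N" using fN3 Npos pN0 by (simp add: field_simps)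
    then show ?thesis by linarith
  qed
  have kLr: "kL n k = r" unfolding r_def kL_eq ..
  have kSr: "kS n k = k - r" unfolding kS_def kLr ..
  have mN: "m \<le> N" using mf by simp
  define R where "R = real ((N - m) choose f) / real (N choose f)"
  have Cpos1: "real (N choose m) > 0" using mN by simp
  have Cpos2: "real (N choose f) > 0" using fltN by simp
  have Cpos3: "real ((N - m) choose f) > 0" using mf by simp
  have Rpos: "R > 0" unfolding R_def using Cpos2 Cpos3 by simp
  have Req: "real ((N - f) choose m) / real (N choose m) = R"
  proof -
    have "real ((N - f) choose m) * real (N choose f) = real (N choose m) * real ((N - m) choose f)"
      using choose_swap[OF mf] by (metis of_nat_mult)
    then show ?thesis unfolding R_def using Cpos1 Cpos2 by (simp add: field_simps)
  qed
  have cardEQ: "real (card (equipartitions n k)) = fact n / (fact (Suc s) ^ r * fact s ^ (k - r))"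
    unfolding s_def r_def by (rule card_equipartitions[OF k0])
  have mueq: "mu p n k = fact n / (fact (Suc s) ^ r * fact s ^ (k - r)) * R"
  proof -
    have mN': "m_edges p n \<le> n choose 2" using mN unfolding m_def N_def .
    have "mu p n k = real (card (equipartitions n k)) * (real ((N - f) choose m) / real (N choose m))"
      using mu_formula[OF k0 mN'] unfolding N_def[symmetric] m_def[symmetric] f_def[symmetric] by simp
    then show ?thesis by (simp only: Req cardEQ)
  qed
  have mubar: "mu_bar p n k = fact n / (fact (Suc s) ^ r * fact s ^ (k - r)) * R / (fact r * fact (k - r))"
    unfolding mu_bar_def mueq kLr kSr ..
  have mubar_pos: "mu_bar p n k > 0" unfolding mubar using Rpos by simp
  have lnmu: "ln (mu_bar p n k) = ln (fact n) - (real r * ln (fact (Suc s)) + real (k - r) * ln (fact s)) + ln R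
      - ln (fact r * fact (k - r))"
    unfolding mubar using Rpos by (simp add: ln_div ln_mult ln_realpow)
  have Rb: "(1 - real m / (real N - real f)) ^ f \<le> R \<and> R \<le> (1 - real m / real N) ^ f"
    unfolding R_def using ratio_bounds[OF mf fltN] .
  have pNle: "p * real N \<le> real N" using p0 p1 Npos by (intro mult_left_le_one_le) auto
  have mNp: "real m / real N \<le> p" using mup Npos by (simp add: divide_le_eq)
  have q_pos: "1 - real m / real N > 0" using mNp p1 by linarith
  have q_le: "1 - real m / real N \<le> (1 - p) * (1 + b / real N)"
  proof -
    have "(1 - p) * (1 + b / real N) = 1 - p + 1 / real N" using bdef p1 by (simp add: field_simps)
    moreover have "real m / real N \<ge> p - 1 / real N"
    proof -
      have "(p * real N - 1) / real N \<le> real m / real N" using mlo Npos by (intro divide_right_mono) auto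
      moreover have "(p * real N - 1) / real N = p - 1 / real N" using Npos by (simp add: field_simps)
      ultimately show ?thesis by simp
    qed
    ultimately show ?thesis by linarith
  qed
  have lnq: "ln (1 - real m / real N) \<le> - ln b + b / real N"
  proof -
    have "ln (1 - real m / real N) \<le> ln ((1 - p) * (1 + b / real N))"
      using q_pos q_le by simp
    also have "\<dots> = ln (1 - p) + ln (1 + b / real N)"
    proof -
      have "b / real N > 0" using b1 Npos by simp
      then show ?thesis using p1 by (intro ln_mult_pos) auto
    qed
    also have "ln (1 + b / real N) \<le> b / real N" using b1 Npos by (intro ln_add_one_self_le_self) simp
    finally show ?thesis using ln1p by linarith
  qed
  have lnR_hi: "ln R \<le> - real f * ln b + b * t"
  proof -
    have "ln R \<le> ln ((1 - real m / real N) ^ f)" using Rb Rpos by simp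
    also have "\<dots> = real f * ln (1 - real m / real N)" using q_pos by (simp add: ln_realpow)
    also have "\<dots> \<le> real f * (- ln b + b / real N)" using lnq by (intro mult_left_mono) auto
    also have "\<dots> = - real f * ln b + b * (real f / real N)" by (simp add: field_simps)
    also have "b * (real f / real N) \<le> b * t"
    proof -
      have "2 * t / real n \<le> t" using n2 t2 by (simp add: field_simps)
      then show ?thesis using fN b1 by (intro mult_left_mono) auto
    qed
    finally show ?thesis by simp
  qed
  define y where "y = b * p * real f / (real N - real f)"
  have fN4: "real f \<le> real N / 4"
  proof -
    have "real N * (1 - p) / 4 \<le> real N / 4" using pN0 by (simp add: field_simps)
    then show ?thesis using fN3 by linarith
  qed
  have NfN: "real N - real f \<ge> real N / 2" using fN4 Npos by linarith
  have Nfpos: "real N - real f > 0" using NfN Npos by simp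
  have y0: "y \<ge> 0" unfolding y_def using b1 p0 Nfpos by simp
  have y_le: "y \<le> 2 * b * p * (real f / real N)"
  proof -
    have "y = b * p * real f / (real N - real f)" by (rule y_def)
    also have "\<dots> \<le> b * p * real f / (real N / 2)"
      using NfN Npos b1 p0 by (intro divide_left_mono) auto
    also have "\<dots> = 2 * b * p * (real f / real N)" by simp
    finally show ?thesis .
  qed
  have y_half: "y \<le> 1 / 2"
  proof -
    have "2 * b * p * (real f / real N) \<le> 2 * b * p * (1 / (4 * b))"
      using fN2 b1 p0 by (intro mult_left_mono) auto
    also have "\<dots> = p / 2" using b1 by simp
    finally show ?thesis using y_le p1 by linarith
  qed
  have q2_ge: "1 - real m / (real N - real f) \<ge> (1 - p) * (1 - y)"
  proof -
    have hb: "(1 - p) * b = 1" using bdef p1 by simp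
    have "(1 - p) * (1 - y) = (1 - p) - ((1 - p) * b) * (p * real f / (real N - real f))"
      unfolding y_def by (simp add: algebra_simps)
    also have "\<dots> = (1 - p) - p * real f / (real N - real f)" using hb by simp
    also have "\<dots> = 1 - p * real N / (real N - real f)" using Nfpos by (simp add: field_simps)
    finally have "(1 - p) * (1 - y) = 1 - p * real N / (real N - real f)" .
    moreover have "real m / (real N - real f) \<le> p * real N / (real N - real f)"
      using mup Nfpos by (intro divide_right_mono) auto
    ultimately show ?thesis by linarith
  qed
  have q2_pos: "(1 - p) * (1 - y) > 0" using p1 y_half by simp
  have lnq2: "ln (1 - real m / (real N - real f)) \<ge> - ln b - 2 * y"
  proof -
    have "ln ((1 - p) * (1 - y)) \<le> ln (1 - real m / (real N - real f))"
      using q2_ge q2_pos by simp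
    moreover have "ln ((1 - p) * (1 - y)) = ln (1 - p) + ln (1 - y)" using p1 y_half by (simp add: ln_mult)
    moreover have "ln (1 - y) \<ge> - y - 2 * y^2" using ln_one_minus_pos_lower_bound[OF y0 y_half] .
    moreover have "2 * y^2 \<le> y"
    proof -
      have "y * (2 * y) \<le> y * 1" using y0 y_half by (intro mult_left_mono) auto
      then show ?thesis by (simp add: power2_eq_square)
    qed
    ultimately show ?thesis using ln1p by linarith
  qed
  have fy: "real f * (2 * y) \<le> 4 * b * t^2"
  proof -
    have "real f * (2 * y) \<le> real f * (2 * (2 * b * p * (real f / real N)))"
      using y_le by (intro mult_left_mono) auto
    also have "\<dots> = 4 * b * p * (real f * (real f / real N))" by (simp add: field_simps)
    also have "real f * (real f / real N) \<le> (real n * t / 2) * (2 * t / real n)"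
      using fnt fN by (intro mult_mono) auto
    also have "(real n * t / 2) * (2 * t / real n) = t^2" using npos by (simp add: field_simps power2_eq_square)
    finally have "real f * (2 * y) \<le> 4 * b * p * t^2" using b1 p0 by (simp add: mult_left_mono)
    also have "\<dots> \<le> 4 * b * t^2" using b1 p1 by (intro mult_right_mono) auto
    finally show ?thesis .
  qed
  have lnR_lo: "ln R \<ge> - real f * ln b - 4 * b * t^2"
  proof -
    have q2p: "1 - real m / (real N - real f) > 0" using q2_ge q2_pos by linarith
    have "ln ((1 - real m / (real N - real f)) ^ f) \<le> ln R" using Rb Rpos q2p by simp
    moreover have "ln ((1 - real m / (real N - real f)) ^ f) = real f * ln (1 - real m / (real N - real f))"
      using q2p by (simp add: ln_realpow)
    moreover have "real f * ln (1 - real m / (real N - real f)) \<ge> real f * (- ln b - 2 * y)"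
      using lnq2 by (intro mult_left_mono) auto
    ultimately show ?thesis using fy by (simp add: algebra_simps)
  qed
  have n1: "n \<ge> 1" using n2 by simp
  have lnfn: "real n * ln (real n) - real n \<le> ln (fact n)"
     "ln (fact n) \<le> real n * ln (real n) - real n + ln (real n) + 1"
    using ln_fact_bounds[OF n1] by auto
  have sge1: "s \<ge> 1" using s1 by simp
  have spos: "real s > 0" using s1 by simp
  have lss: "ln (real s) \<le> ln (real s + 1)" using spos by simp
  have lnS0: "ln (real s + 1) \<ge> 0" using spos by simp
  have fs: "real s * ln (real s) - real s \<le> ln (fact s)"
     "ln (fact s) \<le> real s * ln (real s) - real s + ln (real s) + 1"
    using ln_fact_bounds[OF sge1] by auto
  have fS: "(real s + 1) * ln (real s + 1) - (real s + 1) \<le> ln (fact (Suc s))"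
     "ln (fact (Suc s)) \<le> (real s + 1) * ln (real s + 1) - (real s + 1) + ln (real s + 1) + 1"
    using ln_fact_bounds[of "Suc s"] by (auto simp: add.commute)
  have A_lo: "ln (fact (Suc s)) \<ge> (real s + 1) * (ln (real s) - 1)"
  proof -
    have "(real s + 1) * ln (real s) \<le> (real s + 1) * ln (real s + 1)" using lss spos by (intro mult_left_mono) auto
    then show ?thesis using fS(1) by (simp add: algebra_simps)
  qed
  have B_lo: "ln (fact s) \<ge> real s * (ln (real s) - 1)" using fs(1) by (simp add: algebra_simps)
  have A_hi: "ln (fact (Suc s)) \<le> (real s + 1) * (ln (real s + 1) - 1) + (ln (real s + 1) + 1)"
    using fS(2) by (simp add: algebra_simps)
  have B_hi: "ln (fact s) \<le> real s * (ln (real s + 1) - 1) + (ln (real s + 1) + 1)"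
  proof -
    have "real s * ln (real s) \<le> real s * ln (real s + 1)" using lss spos by (intro mult_left_mono) auto
    then show ?thesis using fs(2) lss by (simp add: algebra_simps)
  qed
  have krpos: "real k - real r \<ge> 0" using rk by simp
  have nsum: "\<And>X. real r * ((real s + 1) * X) + (real k - real r) * (real s * X) = real n * X"
    unfolding nks by (simp add: algebra_simps)
  define Sfac where "Sfac = real r * ln (fact (Suc s)) + real (k - r) * ln (fact s)"
  have Slo: "Sfac \<ge> real n * ln (real s) - real n"
  proof -
    have "real r * ((real s + 1) * (ln (real s) - 1)) \<le> real r * ln (fact (Suc s))"
      using A_lo by (intro mult_left_mono) auto
    moreover have "(real k - real r) * (real s * (ln (real s) - 1)) \<le> (real k - real r) * ln (fact s)"
      using B_lo krpos by (intro mult_left_mono) auto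
    ultimately have "real n * (ln (real s) - 1) \<le> Sfac" unfolding Sfac_def kr using nsum[of "ln (real s) - 1"] by linarith
    then show ?thesis by (simp add: algebra_simps)
  qed
  have Shi: "Sfac \<le> real n * ln (real s + 1) - real n + real k * ln (real s + 1) + real k"
  proof -
    have "real r * ln (fact (Suc s)) \<le> real r * ((real s + 1) * (ln (real s + 1) - 1) + (ln (real s + 1) + 1))"
      using A_hi by (intro mult_left_mono) auto
    moreover have "(real k - real r) * ln (fact s) \<le> (real k - real r) * (real s * (ln (real s + 1) - 1) + (ln (real s + 1) + 1))"
      using B_hi krpos by (intro mult_left_mono) auto
    ultimately have "Sfac \<le> real n * (ln (real s + 1) - 1) + real k * (ln (real s + 1) + 1)"
      unfolding Sfac_def kr using nsum[of "ln (real s + 1) - 1"] by (simp add: algebra_simps)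
    then show ?thesis by (simp add: algebra_simps)
  qed
  have tpos: "t > 0" using t2 by simp
  have ls_t: "ln t - ln (real s) \<le> 2 / t"
  proof -
    have "ln (t / real s) \<le> t / real s - 1" using tpos spos by (intro ln_le_minus_one) simp
    moreover have "ln (t / real s) = ln t - ln (real s)" using tpos spos by (simp add: ln_div)
    moreover have "t / real s - 1 \<le> 1 / real s"
    proof -
      have "t / real s - 1 = (t - real s) / real s" using spos by (simp add: field_simps)
      moreover have "(t - real s) / real s \<le> 1 / real s" using st spos by (intro divide_right_mono) auto
      ultimately show ?thesis by simp
    qed
    moreover have "1 / real s \<le> 2 / t" using s2t spos tpos by (simp add: field_simps)
    ultimately show ?thesis by linarith
  qed
  have lS_t: "ln (real s + 1) - ln t \<le> 1 / t"
  proof -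
    have "ln ((real s + 1) / t) \<le> (real s + 1) / t - 1" using tpos spos by (intro ln_le_minus_one) simp
    moreover have "ln ((real s + 1) / t) = ln (real s + 1) - ln t" using tpos spos by (simp add: ln_div)
    moreover have "(real s + 1) / t - 1 \<le> 1 / t" using st tpos by (simp add: field_simps)
    ultimately show ?thesis by linarith
  qed
  have nk: "real n * (1 / t) = real k" using tk tpos by (simp add: field_simps)
  have F3a: "real n * ln (real s) \<ge> real n * ln t - 2 * real k"
  proof -
    have "real n * (ln t - ln (real s)) \<le> real n * (2 / t)" using ls_t npos by (intro mult_left_mono) auto
    moreover have "real n * (2 / t) = 2 * real k" using tk tpos by (simp add: field_simps)
    moreover have "real n * (ln t - ln (real s)) = real n * ln t - real n * ln (real s)" by (simp add: right_diff_distrib)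
    ultimately show ?thesis by linarith
  qed
  have F3b: "real n * ln (real s + 1) \<le> real n * ln t + real k"
  proof -
    have "real n * (ln (real s + 1) - ln t) \<le> real n * (1 / t)" using lS_t npos by (intro mult_left_mono) auto
    moreover have "real n * (ln (real s + 1) - ln t) = real n * ln (real s + 1) - real n * ln t" by (simp add: right_diff_distrib)
    ultimately show ?thesis using nk by linarith
  qed
  have F3c: "real k * ln (real s + 1) \<le> real k * ln (t + 1)"
    using st spos kpos by (intro mult_left_mono) auto
  have k1: "k \<ge> 1" using k0 by simp
  have lnfk: "real k * ln (real k) - real k \<le> ln (fact k)"
     "ln (fact k) \<le> real k * ln (real k) - real k + ln (real k) + 1"
    using ln_fact_bounds[OF k1] by auto
  have lnkn: "ln (real k) \<le> ln (real n)" using kn kpos by simp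
  have rle: "r \<le> k" using rk by simp
  have split: "ln (fact r * fact (k - r) :: real) \<le> ln (fact k)"
    "ln (fact k :: real) - real k * ln 2 \<le> ln (fact r * fact (k - r))"
    using fact_split_bounds[OF rle] by auto
  have ln2k: "real k * ln 2 \<le> real k" using ln_2_less_1 kpos by simp
  have fb1: "real f * ln b \<ge> real n * (t - 1) / 2 * ln b" using flo lnb by (intro mult_right_mono) auto
  have fb2: "real f * ln b \<le> real n * (t - 1) / 2 * ln b + real k * ln b / 2"
  proof -
    have "real f * ln b \<le> (real n * (t - 1) / 2 + real k / 2) * ln b" using fhi lnb by (intro mult_right_mono) auto
    then show ?thesis by (simp add: algebra_simps)
  qed
  have R1: "ln R \<le> b * t - real f * ln b" using lnR_hi by simp
  have R2: "ln R \<ge> - (real f * ln b) - 4 * b * t^2" using lnR_lo by simp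
  have lnmu2: "ln (mu_bar p n k) = ln (fact n) - Sfac + ln R - ln (fact r * fact (k - r))"
    using lnmu unfolding Sfac_def .
  have extra: "real k * ln (t + 1) \<ge> 0" "real k * ln b \<ge> 0" "ln (real n) \<ge> 0" "b * t \<ge> 0" "4 * b * t^2 \<ge> 0"
    using kpos t2 lnb n2 b1 by auto
  show ?thesis
    unfolding abs_le_iff
    using mubar_pos lnmu2 lnfn Slo Shi F3a F3b F3c lnfk lnkn split ln2k fb1 fb2 R1 R2 extra
    by (intro conjI) linarith+
qed



lemma compose_at_top:
  fixes h :: "real \<Rightarrow> real" and t :: "nat \<Rightarrow> real"
  assumes "(h \<longlongrightarrow> 0) at_top" "filterlim t at_top sequentially"
  shows "((\<lambda>n. h (t n)) \<longlongrightarrow> 0) sequentially"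
  using filterlim_compose[OF assms(1) assms(2)] .

theorem lemma1:
  fixes p b :: real and k :: "nat \<Rightarrow> nat" and \<gamma> x :: "nat \<Rightarrow> real"
  assumes "0 < p" and "p < 1 - 1 / exp 2"
    and "b = 1 / (1 - p)"
    and "\<And>n. \<gamma> n = 2 * log b (real n) - 2 * log b (log b (real n)) - 2 * log b 2"
    and "\<And>n. k n > 0"
    and "\<And>n. x n = real n / real (k n) - \<gamma> n"
    and "x \<in> O(\<lambda>_. 1)"
  shows "\<exists>g. g \<in> o(\<lambda>n. real n) \<and>
           (\<forall>\<^sub>F n in at_top. mu_bar p n (k n) = b powr (- (x n / 2) * real n + g n))"
proof -
  note p0 = assms(1)
  have p1: "p < 1" using assms(2) by (smt (verit) divide_pos_pos exp_gt_zero)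
  note bdef = assms(3) and k0 = assms(5)
  have b1: "b > 1" unfolding bdef using p0 p1 by (simp add: less_divide_eq)
  define c where "c = ln b"
  have c0: "c > 0" unfolding c_def using b1 by simp
  define L where "L = (\<lambda>n::nat. ln (real n) / c)"
  define t where "t = (\<lambda>n. real n / real (k n))"
  have gam: "\<gamma> n = 2 * ln (real n) / c - 2 * ln (ln (real n) / c) / c - 2 * ln 2 / c" for n
    unfolding assms(4) c_def log_def by simp
  have tx: "t n = x n + \<gamma> n" for n unfolding t_def assms(6) by simp
  obtain C where C0: "C > 0" and Cb: "\<forall>\<^sub>F n in sequentially. norm (x n) \<le> C * norm (1::real)"
    using landau_o.bigE[OF assms(7)] by blast
  have Lpos: "\<forall>\<^sub>F n in sequentially. L n > 1"
    unfolding L_def using c0 by real_asymp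
  have G1: "((\<lambda>n. \<gamma> n / L n) \<longlongrightarrow> 2) sequentially"
    unfolding gam L_def using c0 by real_asymp
  have G2: "((\<lambda>n. x n / L n) \<longlongrightarrow> 0) sequentially"
  proof (rule Lim_null_comparison)
    show "\<forall>\<^sub>F n in sequentially. norm (x n / L n) \<le> C / L n"
      using Cb Lpos by eventually_elim (auto simp: abs_divide divide_right_mono)
    show "((\<lambda>n. C / L n) \<longlongrightarrow> 0) sequentially" unfolding L_def using c0 by real_asymp
  qed
  have G3: "((\<lambda>n. t n / L n) \<longlongrightarrow> 2) sequentially"
  proof -
    have "((\<lambda>n. x n / L n + \<gamma> n / L n) \<longlongrightarrow> 0 + 2) sequentially" by (intro tendsto_add G2 G1)
    then show ?thesis unfolding tx by (simp add: add_divide_distrib)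
  qed
  have Linf: "filterlim L at_top sequentially" unfolding L_def using c0 by real_asymp
  have Tinf: "filterlim t at_top sequentially"
  proof -
    have A: "filterlim (\<lambda>n. t n / L n * L n) at_top sequentially"
      by (rule filterlim_tendsto_pos_mult_at_top[OF G3 _ Linf]) simp
    have B: "\<forall>\<^sub>F n in sequentially. t n / L n * L n = t n" using Lpos by eventually_elim simp
    show ?thesis using filterlim_mono_eventually[OF A order_refl order_refl B] by simp
  qed
  have ev_n: "\<forall>\<^sub>F n in sequentially. n \<ge> 2" by (rule eventually_ge_at_top)
  have ev_t: "\<forall>\<^sub>F n in sequentially. t n \<ge> 2" using Tinf by (simp add: filterlim_at_top)
  have G5: "((\<lambda>n. t n / real n) \<longlongrightarrow> 0) sequentially"
  proof -
    have LN: "((\<lambda>n. L n / real n) \<longlongrightarrow> 0) sequentially" unfolding L_def using c0 by real_asymp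
    have "((\<lambda>n. t n / L n * (L n / real n)) \<longlongrightarrow> 2 * 0) sequentially" by (intro tendsto_mult G3 LN)
    moreover have "\<forall>\<^sub>F n in sequentially. t n / L n * (L n / real n) = t n / real n" using Lpos by eventually_elim simp
    ultimately show ?thesis by (rule Lim_transform_eventually[THEN tendsto_eq_rhs]) simp
  qed
  have G6: "((\<lambda>n. t n ^ 2 / real n) \<longlongrightarrow> 0) sequentially"
  proof -
    have LN: "((\<lambda>n. L n ^ 2 / real n) \<longlongrightarrow> 0) sequentially" unfolding L_def using c0 by real_asymp
    have "((\<lambda>n. (t n / L n) ^ 2 * (L n ^ 2 / real n)) \<longlongrightarrow> 2 ^ 2 * 0) sequentially" by (intro tendsto_mult tendsto_power G3 LN)
    moreover have "\<forall>\<^sub>F n in sequentially. (t n / L n) ^ 2 * (L n ^ 2 / real n) = t n ^ 2 / real n"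
      using Lpos by eventually_elim (simp add: power_divide)
    ultimately show ?thesis by (rule Lim_transform_eventually[THEN tendsto_eq_rhs]) simp
  qed
  have G7: "((\<lambda>n. ln (real n) / t n) \<longlongrightarrow> c / 2) sequentially"
  proof -
    have "((\<lambda>n. c / (t n / L n)) \<longlongrightarrow> c / 2) sequentially" by (intro tendsto_divide tendsto_const G3) simp
    moreover have "\<forall>\<^sub>F n in sequentially. c / (t n / L n) = ln (real n) / t n"
      using Lpos ev_t by eventually_elim (insert c0, auto simp: L_def field_simps)
    ultimately show ?thesis by (rule Lim_transform_eventually[THEN tendsto_eq_rhs]) simp
  qed
  have G8: "((\<lambda>n. ln (2 * L n) - ln (t n)) \<longlongrightarrow> 0) sequentially"
  proof -
    have "((\<lambda>n. ln (2 / (t n / L n))) \<longlongrightarrow> ln (2 / 2)) sequentially" by (intro tendsto_ln tendsto_divide tendsto_const G3) simp_all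
    moreover have "\<forall>\<^sub>F n in sequentially. ln (2 / (t n / L n)) = ln (2 * L n) - ln (t n)"
      using Lpos ev_t by eventually_elim (simp add: ln_div divide_divide_eq_right)
    ultimately show ?thesis by (rule Lim_transform_eventually[THEN tendsto_eq_rhs]) simp
  qed
  have G9a: "((\<lambda>n. ln (t n) / t n) \<longlongrightarrow> 0) sequentially"
    by (rule compose_at_top[OF _ Tinf, of "\<lambda>u. ln u / u"]) real_asymp
  have G9b: "((\<lambda>n. 1 / t n) \<longlongrightarrow> 0) sequentially"
    by (rule compose_at_top[OF _ Tinf, of "\<lambda>u. 1 / u"]) real_asymp
  have G9c: "((\<lambda>n. ln (t n + 1) / t n) \<longlongrightarrow> 0) sequentially"
    by (rule compose_at_top[OF _ Tinf, of "\<lambda>u. ln (u + 1) / u"]) real_asymp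
  have ev_tn: "\<forall>\<^sub>F n in sequentially. t n / real n \<le> 1 / (8 * b)"
  proof -
    have "1 / (8 * b) > 0" using b1 by simp
    from order_tendstoD(2)[OF G5 this] show ?thesis by eventually_elim simp
  qed
  define M where "M = (\<lambda>n. real n * ln (real n) - real n * ln (t n) - real (k n) * ln (real (k n)) - real n * (t n - 1) / 2 * ln b)"
  define Err where "Err = (\<lambda>n. 4 * real (k n) + real (k n) * ln (t n + 1) + real (k n) * ln b + 4 * b * (t n)^2 + b * t n + ln (real n) + 1)"
  have Bnd: "\<forall>\<^sub>F n in sequentially. mu_bar p n (k n) > 0 \<and> \<bar>ln (mu_bar p n (k n)) - M n\<bar> \<le> Err n"
    using ev_n ev_t ev_tn
  proof eventually_elim
    case (elim n)
    show ?case unfolding M_def Err_def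
      by (rule main_bounds[OF p0 p1 bdef k0 elim(1) _ elim(2) elim(3)]) (simp add: t_def)
  qed
  have ErrLim: "((\<lambda>n. Err n / real n) \<longlongrightarrow> 0) sequentially"
  proof -
    have l1: "((\<lambda>n. ln (real n) / real n) \<longlongrightarrow> 0) sequentially" by real_asymp
    have l2: "((\<lambda>n. 1 / real n) \<longlongrightarrow> 0) sequentially" by real_asymp
    have A: "((\<lambda>n. 4 * (1 / t n) + ln (t n + 1) / t n + ln b * (1 / t n) + 4 * b * (t n ^ 2 / real n)
        + b * (t n / real n) + ln (real n) / real n + 1 / real n) \<longlongrightarrow>
        4 * 0 + 0 + ln b * 0 + 4 * b * 0 + b * 0 + 0 + 0) sequentially"
      by (intro tendsto_add tendsto_mult tendsto_const G9b G9c G6 G5 l1 l2)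
    have B: "\<forall>\<^sub>F n in sequentially. 4 * (1 / t n) + ln (t n + 1) / t n + ln b * (1 / t n) + 4 * b * (t n ^ 2 / real n)
        + b * (t n / real n) + ln (real n) / real n + 1 / real n = Err n / real n"
      using ev_n
    proof eventually_elim
      case (elim n)
      have kpos: "real (k n) > 0" using k0 by simp
      have npos: "real n > 0" using elim by simp
      have kt: "1 / t n = real (k n) / real n" unfolding t_def by simp
      have kt2: "ln (t n + 1) / t n = ln (t n + 1) * (real (k n) / real n)"
        by (simp only: kt[symmetric]) simp
      show ?case unfolding kt2 unfolding kt Err_def using kpos npos by (simp add: field_simps)
    qed
    show ?thesis using Lim_transform_eventually[OF A B] by simp
  qed
  have Dlim: "((\<lambda>n. (ln (mu_bar p n (k n)) - M n) / real n) \<longlongrightarrow> 0) sequentially"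
  proof (rule Lim_null_comparison)
    show "\<forall>\<^sub>F n in sequentially. norm ((ln (mu_bar p n (k n)) - M n) / real n) \<le> Err n / real n"
      using Bnd ev_n
    proof eventually_elim
      case (elim n)
      then have "real n > 0" by simp
      then show ?case using elim(1) by (simp add: abs_divide divide_right_mono)
    qed
  qed (rule ErrLim)
  have Hlim: "((\<lambda>n. M n / real n + x n * c / 2) \<longlongrightarrow> 0) sequentially"
  proof -
    have A: "((\<lambda>n. (ln (2 * L n) - ln (t n)) - ln (real n) / t n + ln (t n) / t n + c / 2) \<longlongrightarrow> 0 - c / 2 + 0 + c / 2) sequentially"
      by (intro tendsto_add tendsto_diff G8 G7 G9a tendsto_const)
    have B: "\<forall>\<^sub>F n in sequentially. (ln (2 * L n) - ln (t n)) - ln (real n) / t n + ln (t n) / t n + c / 2 = M n / real n + x n * c / 2"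
      using ev_n ev_t Lpos
    proof eventually_elim
      case (elim n)
      have kpos: "real (k n) > 0" using k0 by simp
      have npos: "real n > 0" using elim by simp
      have tpos: "t n > 0" using elim by simp
      have kk: "real (k n) = real n / t n" unfolding t_def using kpos npos by simp
      have lnk: "ln (real (k n)) = ln (real n) - ln (t n)" unfolding kk using npos tpos by (simp add: ln_div)
      have A1: "M n / real n = ln (real n) - ln (t n) - (ln (real n) - ln (t n)) / t n - (t n - 1) / 2 * c"
        unfolding M_def lnk c_def using npos tpos unfolding kk by (simp add: field_simps)
      have A2: "\<gamma> n * c / 2 = ln (real n) - ln (L n) - ln 2"
        unfolding gam L_def using c0 by (simp add: field_simps)
      have A4: "ln (2 * L n) = ln 2 + ln (L n)" using elim by (simp add: ln_mult)
      have e1: "(ln (real n) - ln (t n)) / t n = ln (real n) / t n - ln (t n) / t n" by (simp add: diff_divide_distrib)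
      have e2: "(t n - 1) / 2 * c = t n * c / 2 - c / 2" by (simp add: field_simps)
      have e3: "x n * c / 2 = t n * c / 2 - \<gamma> n * c / 2" unfolding tx by (simp add: field_simps)
      show ?case using A1 A2 A4 e1 e2 e3 by linarith
    qed
    show ?thesis using Lim_transform_eventually[OF A B] by simp
  qed
  define g where "g = (\<lambda>n. ln (mu_bar p n (k n)) / c + x n * real n / 2)"
  have glim: "((\<lambda>n. g n / real n) \<longlongrightarrow> 0) sequentially"
  proof -
    have A: "((\<lambda>n. ((ln (mu_bar p n (k n)) - M n) / real n + (M n / real n + x n * c / 2)) / c) \<longlongrightarrow> (0 + 0) / c) sequentially"
      by (intro tendsto_divide tendsto_add Dlim Hlim tendsto_const) (use c0 in simp)
    have B: "\<forall>\<^sub>F n in sequentially. ((ln (mu_bar p n (k n)) - M n) / real n + (M n / real n + x n * c / 2)) / c = g n / real n"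
      using ev_n
    proof eventually_elim
      case (elim n)
      then have "real n > 0" by simp
      then show ?case unfolding g_def using c0 by (simp add: field_simps)
    qed
    show ?thesis using Lim_transform_eventually[OF A B] by simp
  qed
  have go: "g \<in> o(\<lambda>n. real n)"
    by (rule smalloI_tendsto[OF glim]) (use ev_n in \<open>eventually_elim, simp\<close>)
  have geq: "\<forall>\<^sub>F n in at_top. mu_bar p n (k n) = b powr (- (x n / 2) * real n + g n)"
    using Bnd
  proof eventually_elim
    case (elim n)
    then have pos: "mu_bar p n (k n) > 0" by simp
    have "- (x n / 2) * real n + g n = ln (mu_bar p n (k n)) / c" unfolding g_def by simp
    then have "b powr (- (x n / 2) * real n + g n) = exp (ln (mu_bar p n (k n)) / c * ln b)"
      using b1 by (simp add: powr_def)
    also have "\<dots> = mu_bar p n (k n)" using c0 pos unfolding c_def by simp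
    finally show ?case by simp
  qed
  show ?thesis using go geq by blast
qed

end
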